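(* Let $n\ge2$ be an integer and $\lambda>0$, and let $\gamma(t)=(\omega(t),x(t),y(t))$, $t\in(S,T)$ the maximal interval of existence, be a solution with $\omega>0$ of the system $$\frac{d\omega}{dt}=x\omega,\qquad \frac{dx}{dt}=x^2-xy+n-1-\lambda\omega^2,\qquad \frac{dy}{dt}=xy-nx^2-\lambda\omega^2,$$ such that $\int_{t_0}^T\omega(\sigma)\,d\sigma=\infty$ for every $t_0\in(S,T)$. Then $\limsup_{t\to T}x(t)\ge 0$. *)

theory Defs
  imports "HOL-Analysis.Analysis"
begin

definition eint :: "ereal \<Rightarrow> ereal \<Rightarrow> real set" where
  "eint S T = {t. S < ereal t \<and> ereal t < T}"

definition is_sol ::
  "real \<Rightarrow> real \<Rightarrow> ereal \<Rightarrow> ereal \<Rightarrow> (real \<Rightarrow> real) \<Rightarrow> (real \<Rightarrow> real) \<Rightarrow> (real \<Rightarrow> real) \<Rightarrow> bool" where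
  "is_sol n lam S T w x y \<longleftrightarrow> S < T \<and> (\<forall>t\<in>eint S T.
      (w has_real_derivative (x t * w t)) (at t) \<and>
      (x has_real_derivative (x t ^ 2 - x t * y t + n - 1 - lam * w t ^ 2)) (at t) \<and>
      (y has_real_derivative (x t * y t - n * x t ^ 2 - lam * w t ^ 2)) (at t))"

definition is_maximal_sol ::
  "real \<Rightarrow> real \<Rightarrow> ereal \<Rightarrow> ereal \<Rightarrow> (real \<Rightarrow> real) \<Rightarrow> (real \<Rightarrow> real) \<Rightarrow> (real \<Rightarrow> real) \<Rightarrow> bool" where
  "is_maximal_sol n lam S T w x y \<longleftrightarrow> is_sol n lam S T w x y \<and>
     (\<forall>S' T' w' x' y'. S' \<le> S \<and> T \<le> T' \<and> is_sol n lam S' T' w' x' y' \<and>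
        (\<forall>t\<in>eint S T. w' t = w t \<and> x' t = x t \<and> y' t = y t) \<longrightarrow> S' = S \<and> T' = T)"

definition to_end :: "ereal \<Rightarrow> real filter" where
  "to_end T = (if T = \<infinity> then at_top else at_left (real_of_ereal T))"

end

theory Submission
  imports Defs "HOL-Real_Asymp.Real_Asymp"
begin

lemma finite_int:
  fixes S T :: ereal and w x :: "real \<Rightarrow> real" and t1 e :: real
  assumes t1: "t1 \<in> eint S T" and e: "e > 0"
    and dw: "\<forall>t\<in>eint S T. (w has_real_derivative (x t * w t)) (at t)"
    and pos: "\<forall>t\<in>eint S T. w t > 0"
    and xle: "\<And>s. t1 \<le> s \<Longrightarrow> ereal s < T \<Longrightarrow> x s \<le> - e"
  shows "(\<integral>\<^sup>+ s. ennreal (indicator {s. t1 \<le> s \<and> ereal s < T} s * w s) \<partial>lborel) \<noteq> \<infinity>"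
proof -
  define C where "C = w t1"
  have inI: "s \<in> eint S T" if "t1 \<le> s" "ereal s < T" for s
    using t1 that unfolding eint_def by (auto intro: less_le_trans)
  have bound: "w s \<le> C * exp (- e * (s - t1))" if "t1 \<le> s" "ereal s < T" for s
  proof -
    have "(\<lambda>u. w u * exp (e * u)) s \<le> (\<lambda>u. w u * exp (e * u)) t1"
    proof (rule DERIV_nonpos_imp_nonincreasing[OF that(1)])
      fix u assume u: "t1 \<le> u" "u \<le> s"
      have uI: "u \<in> eint S T" using inI[of u] u that by (meson ereal_less_eq(3) le_less_trans)
      have d: "((\<lambda>u. w u * exp (e * u)) has_real_derivative
           (x u * w u * exp (e * u) + w u * (exp (e * u) * e))) (at u)"
        by (rule derivative_eq_intros dw[rule_format, OF uI] | simp)+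
      have "x u \<le> -e" using xle[of u] u that by (meson ereal_less_eq(3) le_less_trans)
      moreover have "w u > 0" using pos uI by auto
      ultimately have "x u * w u * exp (e * u) + w u * (exp (e * u) * e) \<le> 0"
      proof -
        assume a: "x u \<le> -e" "w u > 0"
        have "x u * w u * exp (e * u) + w u * (exp (e * u) * e) = (x u + e) * (w u * exp (e * u))"
          by (simp add: algebra_simps)
        also have "\<dots> \<le> 0" using a by (intro mult_nonpos_nonneg) auto
        finally show ?thesis .
      qed
      with d show "\<exists>y. ((\<lambda>u. w u * exp (e * u)) has_real_derivative y) (at u) \<and> y \<le> 0" by blast
    qed
    hence "w s * exp (e * s) \<le> C * exp (e * t1)" by (simp add: C_def)
    hence "w s \<le> C * exp (e * t1) / exp (e * s)" by (simp add: field_simps)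
    also have "\<dots> = C * exp (- e * (s - t1))"
    proof -
      have "- e * (s - t1) = e * t1 - e * s" by (simp add: algebra_simps)
      thus ?thesis by (simp add: exp_diff)
    qed
    finally show ?thesis .
  qed
  have Cpos: "C > 0" using pos t1 by (auto simp: C_def)
  have "(\<integral>\<^sup>+ s. ennreal (indicator {s. t1 \<le> s \<and> ereal s < T} s * w s) \<partial>lborel)
        \<le> (\<integral>\<^sup>+ s. ennreal (C * exp (- e * (s - t1))) * indicator {t1..} s \<partial>lborel)"
  proof (rule nn_integral_mono)
    fix s
    show "ennreal (indicator {s. t1 \<le> s \<and> ereal s < T} s * w s)
        \<le> ennreal (C * exp (- e * (s - t1))) * indicator {t1..} s"
      using bound[of s] by (auto simp: indicator_def intro: ennreal_leI)
  qed
  also have "\<dots> = ennreal (0 - (- (C / e) * exp (- e * (t1 - t1))))"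
  proof (rule nn_integral_FTC_atLeast[where F="\<lambda>s. - (C / e) * exp (- e * (s - t1))"])
    show "(\<lambda>s. C * exp (- e * (s - t1))) \<in> borel_measurable borel"
      by (intro borel_measurable_continuous_onI continuous_intros)
  next
    fix s :: real
    show "((\<lambda>s. - (C / e) * exp (- e * (s - t1))) has_real_derivative C * exp (- e * (s - t1))) (at s)"
      using e by (auto intro!: derivative_eq_intros simp: field_simps)
  next
    fix s :: real
    show "0 \<le> C * exp (- e * (s - t1))" using Cpos by simp
  next
    show "((\<lambda>s. - (C / e) * exp (- e * (s - t1))) \<longlongrightarrow> 0) at_top"
      using e by real_asymp
  qed
  also have "\<dots> < \<infinity>" by simp
  finally show ?thesis by simp
qed

theorem lemma3p6:
  fixes n :: nat and lam :: real and S T :: ereal and w x y :: "real \<Rightarrow> real"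
  assumes "n \<ge> 2" and "lam > 0"
    and "is_maximal_sol (real n) lam S T w x y"
    and "\<forall>t\<in>eint S T. w t > 0"
    and "\<forall>t0\<in>eint S T. (\<integral>\<^sup>+ s. ennreal (indicator {s. t0 \<le> s \<and> ereal s < T} s * w s) \<partial>lborel) = \<infinity>"
  shows "Limsup (to_end T) (\<lambda>t. ereal (x t)) \<ge> 0"
proof (rule ccontr)
  assume "\<not> ?thesis"
  hence lt: "Limsup (to_end T) (\<lambda>t. ereal (x t)) < 0" by simp
  then obtain z where z: "Limsup (to_end T) (\<lambda>t. ereal (x t)) < z" "z < 0" using dense[OF lt] by (elim exE conjE)
  have "z \<noteq> -\<infinity>" using z(1) by auto
  hence zfin: "\<bar>z\<bar> \<noteq> \<infinity>" using z(2) by (cases z) auto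
  obtain r where zr: "z = ereal r" using zfin by (cases z) auto
  define e where "e = - r"
  have ez: "z = ereal (- e)" "e > 0" using zr z(2) unfolding e_def by auto
  have ev: "eventually (\<lambda>t. x t < - e) (to_end T)"
    using Limsup_lessD[OF z(1)] unfolding ez(1) by simp
  have sol: "is_sol (real n) lam S T w x y" using assms(3) by (simp add: is_maximal_sol_def)
  hence ST: "S < T" by (simp add: is_sol_def)
  have dw: "\<forall>t\<in>eint S T. (w has_real_derivative (x t * w t)) (at t)"
    using sol by (simp add: is_sol_def)
  obtain t0 where t0: "S < ereal t0" "ereal t0 < T" using ereal_dense2[OF ST] by blast
  obtain t1 where t1: "t1 \<in> eint S T" and xle: "\<And>s. t1 \<le> s \<Longrightarrow> ereal s < T \<Longrightarrow> x s \<le> - e"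
  proof (cases "T = \<infinity>")
    case True
    then obtain N where N: "\<And>s. s \<ge> N \<Longrightarrow> x s < - e"
      using ev by (auto simp: to_end_def eventually_at_top_linorder)
    show ?thesis
    proof (rule that[of "max N t0"])
      have "ereal t0 \<le> ereal (max N t0)" by simp
      then show "max N t0 \<in> eint S T" using t0 True unfolding eint_def
        by (simp add: order_less_le_trans)
      fix s assume "max N t0 \<le> s" thus "x s \<le> - e" using N[of s] by auto
    qed
  next
    case False
    then obtain r where r: "T = ereal r" using t0 by (cases T) auto
    have "\<exists>b<r. \<forall>s>b. s < r \<longrightarrow> x s < - e"
      using ev r by (simp add: to_end_def eventually_at_left_field)
    then obtain b where b: "b < r" "\<And>s. b < s \<Longrightarrow> s < r \<Longrightarrow> x s < -e" by blast
    define t1 where "t1 = (max b t0 + r) / 2"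
    have "t0 < r" using t0 r by simp
    hence "max b t0 < t1" "t1 < r" using b by (auto simp: t1_def)
    show ?thesis
    proof (rule that[of t1])
      have "ereal t0 < ereal t1" using \<open>max b t0 < t1\<close> by simp
      then show "t1 \<in> eint S T" unfolding eint_def r using t0 \<open>t1 < r\<close>
        by (simp add: order_less_trans)
      fix s assume "t1 \<le> s" "ereal s < T" thus "x s \<le> - e"
        using b(2)[of s] r \<open>max b t0 < t1\<close> by auto
    qed
  qed
  have "(\<integral>\<^sup>+ s. ennreal (indicator {s. t1 \<le> s \<and> ereal s < T} s * w s) \<partial>lborel) \<noteq> \<infinity>"
    by (rule finite_int[OF t1 ez(2) dw assms(4) xle])
  moreover have "(\<integral>\<^sup>+ s. ennreal (indicator {s. t1 \<le> s \<and> ereal s < T} s * w s) \<partial>lborel) = \<infinity>"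
    using assms(5) t1 by (rule bspec)
  ultimately show False by (rule notE)
qed

end
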